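(* The classes of trajectories $D$ and $D_1$ coincide: every trajectory $\tilde{\mathbf r}_\lambda(t,a_0,\omega_0)$ with $\lambda>0$, $a_0>0$, $\omega_0\ne0$, $0<a_0^3\omega_0^2/(2\lambda)<2$, coincides for all $t\ge0$ with some trajectory $\tilde{\mathbf r}_{\lambda'}(t,1,\omega_0')$ with $\lambda'>0$, $\omega_0'\neq0$, $\omega_0'^2/(2\lambda')<2$ (and trivially $D_1\subset D$).
   Context: Fix $N\ge2$, masses $m_i>0$, $\gamma>0$. Planar configuration space $\mathfrak R=\{\mathbf r=(\mathbf r_1,\dots,\mathbf r_N)\in(\mathbb R^2)^N:\ \mathbf r_i\neq\mathbf r_j \text{ for } i\neq j\}$; $f(\mathbf r)=\sum_{i<j}\frac{\gamma m_im_j}{|\mathbf r_j-\mathbf r_i|}$, $g(\mathbf r)=\sum_i m_i|\mathbf r_i|^2$. Fix $\lambda_*>0$ and a global minimizer $\mathbf r_{\lambda_*}$ of $f+\lambda_*g$ on $\mathfrak R$; for every $\lambda>0$ put $\mathbf r_\lambda=(\lambda_*/\lambda)^{1/3}\mathbf r_{\lambda_*}$ (a global minimizer of $f+\lambda g$). Identify $\mathbb R^2$ with $\mathbb C$ and let $z_{j\lambda}\in\mathbb C$ correspond to $\mathbf r_{j\lambda}$. For $\lambda>0$, $a_0>0$, $\omega_0\ne0$ with $0<a_0^3\omega_0^2/(2\lambda)<2$, set $e=1-a_0^3\omega_0^2/(2\lambda)$ (so $|e|<1$), $p=a_0(1-e)$, $a(\varphi)=p/(1-e\cos\varphi)$,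 and let $\varphi(t)$ be defined by $a_0^2\omega_0\,t=\int_0^{\varphi(t)}\frac{p^2\,d\alpha}{(1-e\cos\alpha)^2}$. The trajectory $\tilde{\mathbf r}_\lambda(t,a_0,\omega_0)$, $t\ge0$, is the one whose $j$-th particle has complex position $Z_j(t)=z_{j\lambda}\,a(\varphi(t))\,e^{i\varphi(t)}$, $j=1,\dots,N$. $D$ is the class of all such trajectories with parameters satisfying $0<a_0^3\omega_0^2/(2\lambda)<2$, and $D_1\subset D$ the subclass with $a_0=1$ (condition $\omega_0^2/(2\lambda)<2$). *)

theory Defs
  imports "HOL-Analysis.Analysis"
begin

text \<open>Planar configurations of N particles, indexed 0..N-1, with R^2 identified with C.\<close>

definition config_space :: "nat \<Rightarrow> (nat \<Rightarrow> complex) set" where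
  "config_space N = {r. \<forall>i<N. \<forall>j<N. i \<noteq> j \<longrightarrow> r i \<noteq> r j}"

definition fpot :: "nat \<Rightarrow> (nat \<Rightarrow> real) \<Rightarrow> real \<Rightarrow> (nat \<Rightarrow> complex) \<Rightarrow> real" where
  "fpot N m \<gamma> r = (\<Sum>(i,j)\<in>{(i,j). i < j \<and> j < N}. \<gamma> * m i * m j / cmod (r j - r i))"

definition gmom :: "nat \<Rightarrow> (nat \<Rightarrow> real) \<Rightarrow> (nat \<Rightarrow> complex) \<Rightarrow> real" where
  "gmom N m r = (\<Sum>i<N. m i * (cmod (r i))^2)"

definition global_min :: "nat \<Rightarrow> (nat \<Rightarrow> real) \<Rightarrow> real \<Rightarrow> real \<Rightarrow> (nat \<Rightarrow> complex) \<Rightarrow> bool" where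
  "global_min N m \<gamma> lam r \<longleftrightarrow> r \<in> config_space N \<and>
     (\<forall>r'\<in>config_space N. fpot N m \<gamma> r + lam * gmom N m r \<le> fpot N m \<gamma> r' + lam * gmom N m r')"

definition ecc :: "real \<Rightarrow> real \<Rightarrow> real \<Rightarrow> real" where
  "ecc lam a0 w0 = 1 - a0^3 * w0^2 / (2 * lam)"

definition prm :: "real \<Rightarrow> real \<Rightarrow> real \<Rightarrow> real" where
  "prm lam a0 w0 = a0 * (1 - ecc lam a0 w0)"

definition rad :: "real \<Rightarrow> real \<Rightarrow> real \<Rightarrow> real \<Rightarrow> real" where
  "rad lam a0 w0 \<phi> = prm lam a0 w0 / (1 - ecc lam a0 w0 * cos \<phi>)"

definition oint :: "(real \<Rightarrow> real) \<Rightarrow> real \<Rightarrow> real" where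
  "oint f x = (if 0 \<le> x then integral {0..x} f else - integral {x..0} f)"

definition Phi :: "real \<Rightarrow> real \<Rightarrow> real \<Rightarrow> real \<Rightarrow> real" where
  "Phi lam a0 w0 x = oint (\<lambda>\<alpha>. (prm lam a0 w0)^2 / (1 - ecc lam a0 w0 * cos \<alpha>)^2) x"

definition angle :: "real \<Rightarrow> real \<Rightarrow> real \<Rightarrow> real \<Rightarrow> real" where
  "angle lam a0 w0 t = (THE \<phi>. a0^2 * w0 * t = Phi lam a0 w0 \<phi>)"

definition zlam :: "real \<Rightarrow> (nat \<Rightarrow> complex) \<Rightarrow> real \<Rightarrow> nat \<Rightarrow> complex" where
  "zlam lamstar rstar lam j = complex_of_real ((lamstar / lam) powr (1/3)) * rstar j"

definition traj :: "real \<Rightarrow> (nat \<Rightarrow> complex) \<Rightarrow> real \<Rightarrow> real \<Rightarrow> real \<Rightarrow> real \<Rightarrow> nat \<Rightarrow> complex" where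
  "traj lamstar rstar lam a0 w0 t j =
     zlam lamstar rstar lam j * complex_of_real (rad lam a0 w0 (angle lam a0 w0 t))
       * exp (\<i> * complex_of_real (angle lam a0 w0 t))"

definition traj_obj :: "nat \<Rightarrow> real \<Rightarrow> (nat \<Rightarrow> complex) \<Rightarrow> real \<Rightarrow> real \<Rightarrow> real \<Rightarrow> real \<Rightarrow> nat \<Rightarrow> complex" where
  "traj_obj N lamstar rstar lam a0 w0 =
     (\<lambda>t j. if 0 \<le> t \<and> j < N then traj lamstar rstar lam a0 w0 t j else 0)"

definition classD :: "nat \<Rightarrow> real \<Rightarrow> (nat \<Rightarrow> complex) \<Rightarrow> (real \<Rightarrow> nat \<Rightarrow> complex) set" where
  "classD N lamstar rstar = {traj_obj N lamstar rstar lam a0 w0 | lam a0 w0.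
      lam > 0 \<and> a0 > 0 \<and> w0 \<noteq> 0 \<and> 0 < a0^3 * w0^2 / (2 * lam) \<and> a0^3 * w0^2 / (2 * lam) < 2}"

definition classD1 :: "nat \<Rightarrow> real \<Rightarrow> (nat \<Rightarrow> complex) \<Rightarrow> (real \<Rightarrow> nat \<Rightarrow> complex) set" where
  "classD1 N lamstar rstar = {traj_obj N lamstar rstar lam 1 w0 | lam w0.
      lam > 0 \<and> w0 \<noteq> 0 \<and> w0^2 / (2 * lam) < 2}"

end

theory Submission
  imports Defs
begin

lemma scale_traj:
  assumes lam: "lam > 0" and a0: "a0 > 0" and ls: "lamstar > 0"
  shows "traj lamstar rstar lam a0 w0 = traj lamstar rstar (lam / a0^3) 1 w0"
proof -
  define lam' where "lam' = lam / a0^3"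
  have lam'p: "lam' > 0" using lam a0 by (simp add: lam'_def)
  have e: "ecc lam a0 w0 = ecc lam' 1 w0"
    using a0 by (simp add: ecc_def lam'_def field_simps)
  have p: "prm lam a0 w0 = a0 * prm lam' 1 w0"
    by (simp add: prm_def e)
  have r: "rad lam a0 w0 x = a0 * rad lam' 1 w0 x" for x
    by (simp add: rad_def p e)
  have Ph: "Phi lam a0 w0 x = a0^2 * Phi lam' 1 w0 x" for x
  proof -
    have "(\<lambda>\<alpha>. (prm lam a0 w0)^2 / (1 - ecc lam a0 w0 * cos \<alpha>)^2)
        = (\<lambda>\<alpha>. a0^2 * ((prm lam' 1 w0)^2 / (1 - ecc lam' 1 w0 * cos \<alpha>)^2))"
      by (simp add: p e power_mult_distrib)
    then show ?thesis unfolding Phi_def oint_def by (simp only: integral_mult_right) simp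
  qed
  have ang: "angle lam a0 w0 t = angle lam' 1 w0 t" for t
  proof -
    have "(a0^2 * w0 * t = Phi lam a0 w0 \<phi>) = (1^2 * w0 * t = Phi lam' 1 w0 \<phi>)" for \<phi>
      using a0 by (simp add: Ph)
    then show ?thesis unfolding angle_def by simp
  qed
  have z: "zlam lamstar rstar lam' j = complex_of_real a0 * zlam lamstar rstar lam j" for j
  proof -
    have "(lamstar / lam') powr (1/3) = ((lamstar / lam) * a0 powr 3) powr (1/3)"
      using a0 by (simp add: lam'_def powr_realpow)
    also have "\<dots> = (lamstar / lam) powr (1/3) * (a0 powr 3) powr (1/3)"
      using a0 lam ls by (intro powr_mult)
    also have "\<dots> = (lamstar / lam) powr (1/3) * a0"
      using a0 by (simp only: powr_powr) simp
    finally show ?thesis unfolding zlam_def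
      by (simp add: mult.assoc)
  qed
  show ?thesis
    unfolding lam'_def[symmetric]
    by (rule ext, rule ext) (simp add: traj_def z r ang a0 field_simps)
qed

theorem theorem8p1:
  fixes N :: nat and m :: "nat \<Rightarrow> real" and \<gamma> lamstar :: real and rstar :: "nat \<Rightarrow> complex"
  assumes "N \<ge> 2" and "\<forall>i<N. m i > 0" and "\<gamma> > 0" and "lamstar > 0"
    and "global_min N m \<gamma> lamstar rstar"
  shows "classD N lamstar rstar = classD1 N lamstar rstar"
proof
  show "classD N lamstar rstar \<subseteq> classD1 N lamstar rstar"
  proof
    fix T assume "T \<in> classD N lamstar rstar"
    then obtain lam a0 w0 where T: "T = traj_obj N lamstar rstar lam a0 w0"
      and h: "lam > 0" "a0 > 0" "w0 \<noteq> 0" "0 < a0^3 * w0^2 / (2 * lam)" "a0^3 * w0^2 / (2 * lam) < 2"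
      unfolding classD_def by blast
    have "T = traj_obj N lamstar rstar (lam / a0^3) 1 w0"
      unfolding T traj_obj_def by (subst scale_traj[OF h(1) h(2) assms(4)]) (rule refl)
    moreover have "lam / a0^3 > 0" using h by simp
    moreover have "w0^2 / (2 * (lam / a0^3)) < 2" using h(5) h(2) by (simp add: field_simps)
    ultimately show "T \<in> classD1 N lamstar rstar"
      unfolding classD1_def using h(3) by blast
  qed
next
  show "classD1 N lamstar rstar \<subseteq> classD N lamstar rstar"
  proof
    fix T assume "T \<in> classD1 N lamstar rstar"
    then obtain lam w0 where T: "T = traj_obj N lamstar rstar lam 1 w0"
      and h: "lam > 0" "w0 \<noteq> 0" "w0^2 / (2 * lam) < 2"
      unfolding classD1_def by blast
    have "0 < (1::real)^3 * w0^2 / (2 * lam)" using h by simp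
    then show "T \<in> classD N lamstar rstar"
      unfolding classD_def using T h by fastforce
  qed
qed

end
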